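(* Let $d>0$, let $I\subseteq\mathbb{R}$ be a nonempty, non-singleton interval with $\ell(I)\geq d$, and let $f: I\to\mathbb{R}$ be $d$-periodically increasing. Then there exists an increasing function $\widehat{f}: I\to\mathbb{R}$ such that $\sup_{x\in I}|f(x)-\widehat{f}(x)|\leq\frac{\mathscr{H}_d(f)}{2}$.
   Context: $\ell(I)$ denotes the length of $I$. A function $f: I\to\mathbb{R}$ is $d$-periodically increasing if $f(x)\leq f(y)$ for all $x,y\in I$ with $y-x\geq d$. For $x\in I$ let $\mathscr{H}_{x_d}(f)=\sup_{u,v\in[x,x+d]\cap I}|f(u)-f(v)|$, and $\mathscr{H}_d(f)=\sup_{x\in I}\mathscr{H}_{x_d}(f)$. *)

theory Defs
  imports "HOL-Analysis.Analysis"
begin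

definition interval_length :: "real set \<Rightarrow> ereal" where
  "interval_length I = (SUP x\<in>I. ereal x) - (INF x\<in>I. ereal x)"

definition periodically_increasing :: "real \<Rightarrow> real set \<Rightarrow> (real \<Rightarrow> real) \<Rightarrow> bool" where
  "periodically_increasing d I f \<longleftrightarrow> (\<forall>x\<in>I. \<forall>y\<in>I. y - x \<ge> d \<longrightarrow> f x \<le> f y)"

definition local_osc :: "real \<Rightarrow> real set \<Rightarrow> (real \<Rightarrow> real) \<Rightarrow> real \<Rightarrow> ereal" where
  "local_osc d I f x = (SUP p\<in>({x..x+d} \<inter> I) \<times> ({x..x+d} \<inter> I). ereal \<bar>f (fst p) - f (snd p)\<bar>)"

definition osc :: "real \<Rightarrow> real set \<Rightarrow> (real \<Rightarrow> real) \<Rightarrow> ereal" where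
  "osc d I f = (SUP x\<in>I. local_osc d I f x)"

end

theory Submission
  imports Defs
begin

lemma key_osc:
  assumes "d > 0" and "periodically_increasing d I f" and "y \<in> I" and "z \<in> I" and "y \<le> z"
  shows "ereal (f y - f z) \<le> osc d I f"
proof -
  have win: "ereal \<bar>f u - f v\<bar> \<le> osc d I f" if "u \<in> {y..y+d} \<inter> I" "v \<in> {y..y+d} \<inter> I" for u v
  proof -
    have "ereal \<bar>f u - f v\<bar> \<le> local_osc d I f y"
      unfolding local_osc_def
      by (rule SUP_upper2[where i="(u,v)"]) (use that in auto)
    also have "\<dots> \<le> osc d I f" unfolding osc_def by (rule SUP_upper) (use assms in auto)
    finally show ?thesis .
  qed
  show ?thesis
  proof (cases "z - y \<ge> d")
    case True
    then have "f y \<le> f z" using assms unfolding periodically_increasing_def by auto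
    then have "ereal (f y - f z) \<le> ereal \<bar>f y - f y\<bar>" by simp
    also have "\<dots> \<le> osc d I f" using win[of y y] assms by auto
    finally show ?thesis .
  next
    case False
    have "ereal (f y - f z) \<le> ereal \<bar>f y - f z\<bar>" by simp
    also have "\<dots> \<le> osc d I f" using win[of y z] assms False by auto
    finally show ?thesis .
  qed
qed

theorem theorem3p3:
  fixes d :: real and I :: "real set" and f :: "real \<Rightarrow> real"
  assumes "d > 0"
    and "is_interval I"
    and "\<exists>a\<in>I. \<exists>b\<in>I. a \<noteq> b"
    and "interval_length I \<ge> ereal d"
    and "periodically_increasing d I f"
  shows "\<exists>g :: real \<Rightarrow> real. mono_on I g \<and>
           (SUP x\<in>I. ereal \<bar>f x - g x\<bar>) \<le> osc d I f / 2"
proof (cases "osc d I f = \<infinity>")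
  case True
  show ?thesis by (rule exI[of _ "\<lambda>_. 0"]) (simp add: True mono_on_def)
next
  case False
  obtain a where aI: "a \<in> I" using assms(3) by auto
  have "ereal (f a - f a) \<le> osc d I f" using key_osc[OF assms(1,5) aI aI] by simp
  then have "osc d I f \<noteq> - \<infinity>" by auto
  with False obtain H where H: "osc d I f = ereal H" by (cases "osc d I f") auto
  have K: "f y - f z \<le> H" if "y \<in> I" "z \<in> I" "y \<le> z" for y z
    using key_osc[OF assms(1,5) that] H by simp
  define U where "U x = Sup (f ` {y\<in>I. y \<le> x})" for x
  have bdd: "bdd_above (f ` {y\<in>I. y \<le> x})" if "x \<in> I" for x
    using K that by (intro bdd_aboveI[of _ "f x + H"]) force
  have U1: "f x \<le> U x" if "x \<in> I" for x
    unfolding U_def using that bdd[OF that] by (intro cSup_upper) auto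
  have U2: "U x \<le> f x + H" if "x \<in> I" for x
    unfolding U_def using that K by (intro cSup_least) force+
  have mono: "mono_on I (\<lambda>x. U x - H/2)"
  proof (rule mono_onI)
    fix r s assume rs: "r \<in> I" "s \<in> I" "r \<le> s"
    have "U r \<le> U s" unfolding U_def
      using rs bdd[OF rs(2)] by (intro cSup_subset_mono) auto
    then show "U r - H/2 \<le> U s - H/2" by simp
  qed
  have "(SUP x\<in>I. ereal \<bar>f x - (U x - H/2)\<bar>) \<le> ereal (H/2)"
  proof (rule SUP_least)
    fix x assume "x \<in> I"
    with U1[of x] U2[of x] have "\<bar>f x - (U x - H/2)\<bar> \<le> H/2" by linarith
    then show "ereal \<bar>f x - (U x - H/2)\<bar> \<le> ereal (H/2)" by simp
  qed
  also have "ereal (H/2) = osc d I f / 2" using H by simp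
  finally show ?thesis using mono by blast
qed

end
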